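(* (i) The subKautz digraph $sK(d,\ell)$ has diameter $2\ell$ whenever either $d=3$ and $\ell\ge 4$, or $d\ge 3$ and $\ell=2$. (ii) The subKautz digraph $sK(3,3)$ has diameter $5$.
   Context: The subKautz digraph $sK(d,\ell)$ ($d,\ell\ge2$) has vertex set $\{x_1\ldots x_\ell\in\mathbb Z_{d+1}^\ell : x_i\neq x_{i+1},\ i=1,\ldots,\ell-1\}$ and arcs $x_1\ldots x_\ell\to x_2\ldots x_\ell x_{\ell+1}$ for every $x_{\ell+1}\in\mathbb Z_{d+1}$ with $x_{\ell+1}\neq x_1,x_\ell$. The diameter is the maximum directed distance between ordered pairs of vertices. *)

theory Defs
  imports Main "HOL-Library.Extended_Nat"
begin

definition sk_vert :: "nat \<Rightarrow> nat \<Rightarrow> nat list \<Rightarrow> bool" where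
  "sk_vert d l x \<longleftrightarrow> length x = l \<and> (\<forall>a\<in>set x. a \<le> d) \<and>
     (\<forall>i. i + 1 < l \<longrightarrow> x ! i \<noteq> x ! (i + 1))"

definition sk_arc :: "nat \<Rightarrow> nat \<Rightarrow> nat list \<Rightarrow> nat list \<Rightarrow> bool" where
  "sk_arc d l x y \<longleftrightarrow> sk_vert d l x \<and>
     (\<exists>z. z \<le> d \<and> z \<noteq> hd x \<and> z \<noteq> last x \<and> y = tl x @ [z])"

definition sk_dist :: "nat \<Rightarrow> nat \<Rightarrow> nat list \<Rightarrow> nat list \<Rightarrow> enat" where
  "sk_dist d l x y = (if \<exists>n. (sk_arc d l ^^ n) x y
      then enat (LEAST n. (sk_arc d l ^^ n) x y) else \<infinity>)"

definition sk_diameter :: "nat \<Rightarrow> nat \<Rightarrow> enat" where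
  "sk_diameter d l = (SUP x\<in>{x. sk_vert d l x}. SUP y\<in>{y. sk_vert d l y}. sk_dist d l x y)"

end

theory Submission
  imports Defs
begin


definition wvalid :: "nat \<Rightarrow> nat \<Rightarrow> nat list \<Rightarrow> bool" where
  "wvalid d l w \<longleftrightarrow> (\<forall>a\<in>set w. a \<le> d) \<and> (\<forall>j. 0 < j \<and> j < length w \<longrightarrow> w!j \<noteq> w!(j-1))
     \<and> (\<forall>j. l \<le> j \<and> j < length w \<longrightarrow> w!j \<noteq> w!(j-l))"

lemma walk_word:
  assumes l: "l \<ge> 1" and x: "sk_vert d l x"
  shows "(sk_arc d l ^^ k) x y \<longleftrightarrow> (\<exists>w. length w = l + k \<and> take l w = x \<and> drop k w = y \<and> wvalid d l w)"
proof (induction k arbitrary: y)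
  case 0
  have lx: "length x = l" using x unfolding sk_vert_def by auto
  have vx: "wvalid d l x" unfolding wvalid_def
  proof (intro conjI allI impI)
    show "\<forall>a\<in>set x. a \<le> d" using x unfolding sk_vert_def by auto
  next
    fix j assume j: "0 < j \<and> j < length x"
    then have "j - 1 + 1 < l" using lx by simp
    then have "x ! (j-1) \<noteq> x ! (j - 1 + 1)" using x unfolding sk_vert_def by blast
    then show "x ! j \<noteq> x ! (j - 1)" using j by simp
  next
    fix j assume "l \<le> j \<and> j < length x" then show "x ! j \<noteq> x ! (j - l)" using lx by linarith
  qed
  show ?case
  proof
    assume "(sk_arc d l ^^ 0) x y"
    then have "y = x" by simp
    then show "\<exists>w. length w = l + 0 \<and> take l w = x \<and> drop 0 w = y \<and> wvalid d l w"
      using lx vx by (intro exI[of _ x]) auto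
  next
    assume "\<exists>w. length w = l + 0 \<and> take l w = x \<and> drop 0 w = y \<and> wvalid d l w"
    then show "(sk_arc d l ^^ 0) x y" by auto
  qed
next
  case (Suc k)
  show ?case
  proof
    assume "(sk_arc d l ^^ Suc k) x y"
    then obtain u where u: "(sk_arc d l ^^ k) x u" "sk_arc d l u y" by auto
    from Suc.IH[THEN iffD1, OF u(1)] obtain w where w: "length w = l + k" "take l w = x" "drop k w = u" "wvalid d l w" by blast
    from u(2) obtain z where z: "sk_vert d l u" "z \<le> d" "z \<noteq> hd u" "z \<noteq> last u" "y = tl u @ [z]"
      unfolding sk_arc_def by blast
    have hu: "hd u = w ! k" using w(1,3) l by (subst hd_drop_conv_nth[symmetric]) auto
    have lu: "last u = w ! (l + k - 1)"
    proof -
      have "k < length w" using w(1) l by simp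
      then have "last u = last w" using w(3)[symmetric] by simp
      also have "\<dots> = w ! (l + k - 1)" using w(1) l last_conv_nth[of w] by force
      finally show ?thesis .
    qed
    let ?w = "w @ [z]"
    have "length ?w = l + Suc k" using w by simp
    moreover have "take l ?w = x" using w by simp
    moreover have "drop (Suc k) ?w = y" using w(1) z(5) l w(3)[symmetric] by (simp add: drop_Suc tl_drop)
    moreover have "wvalid d l ?w"
      unfolding wvalid_def
    proof (intro conjI allI impI)
      show "\<forall>a\<in>set ?w. a \<le> d" using w(4) z(2) unfolding wvalid_def by auto
    next
      fix j assume j: "0 < j \<and> j < length ?w"
      show "?w ! j \<noteq> ?w ! (j - 1)"
      proof (cases "j < length w")
        case True then show ?thesis using j w(4) unfolding wvalid_def by (simp add: nth_append less_imp_diff_less)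
      next
        case False then have "j = l + k" using j w(1) by simp
        then show ?thesis using z(4) lu w(1) l by (simp add: nth_append)
      qed
    next
      fix j assume j: "l \<le> j \<and> j < length ?w"
      show "?w ! j \<noteq> ?w ! (j - l)"
      proof (cases "j < length w")
        case True then show ?thesis using j w(4) unfolding wvalid_def by (simp add: nth_append less_imp_diff_less)
      next
        case False then have "j = l + k" using j w(1) by simp
        then show ?thesis using z(3) hu w(1) l by (simp add: nth_append)
      qed
    qed
    ultimately show "\<exists>w. length w = l + Suc k \<and> take l w = x \<and> drop (Suc k) w = y \<and> wvalid d l w" by (intro exI[of _ "w @ [z]"]) simp
  next
    assume "\<exists>w. length w = l + Suc k \<and> take l w = x \<and> drop (Suc k) w = y \<and> wvalid d l w"
    then obtain w' where w': "length w' = l + Suc k" "take l w' = x" "drop (Suc k) w' = y" "wvalid d l w'" by blast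
    have v1: "\<forall>a\<in>set w'. a \<le> d" and v2: "\<And>j. 0 < j \<Longrightarrow> j < length w' \<Longrightarrow> w'!j \<noteq> w'!(j-1)"
      and v3: "\<And>j. l \<le> j \<Longrightarrow> j < length w' \<Longrightarrow> w'!j \<noteq> w'!(j-l)" using w'(4) unfolding wvalid_def by auto
    define w where "w = butlast w'"
    define z where "z = last w'"
    have ww: "w' = w @ [z]" unfolding w_def z_def using w'(1) by (intro append_butlast_last_id[symmetric]) auto
    have lw: "length w = l + k" using w'(1) ww by simp
    have vw: "wvalid d l w" unfolding wvalid_def
    proof (intro conjI allI impI)
      have "set w \<subseteq> set w'" using ww by auto
      then show "\<forall>a\<in>set w. a \<le> d" using v1 by blast
    next
      fix j assume j: "0 < j \<and> j < length w"
      then have "0 < j \<and> j < length w'" using ww by simp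
      then have "w' ! j \<noteq> w' ! (j - 1)" using v2[of j] by simp
      then show "w ! j \<noteq> w ! (j - 1)" using j ww by (simp add: nth_append less_imp_diff_less)
    next
      fix j assume j: "l \<le> j \<and> j < length w"
      then have "l \<le> j \<and> j < length w'" using ww by simp
      then have "w' ! j \<noteq> w' ! (j - l)" using v3[of j] by simp
      then show "w ! j \<noteq> w ! (j - l)" using j ww by (simp add: nth_append less_imp_diff_less)
    qed
    have tw: "take l w = x" using w'(2) ww lw by simp
    define u where "u = drop k w"
    have "\<exists>w. length w = l + k \<and> take l w = x \<and> drop k w = u \<and> wvalid d l w"
      using lw tw vw unfolding u_def by (intro exI[of _ w]) simp
    then have pu: "(sk_arc d l ^^ k) x u" by (rule Suc.IH[THEN iffD2])
    have lu: "length u = l" using lw u_def by simp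
    have nu: "u ! i = w ! (k + i)" if "i < l" for i using that lw u_def by simp
    have su: "sk_vert d l u"
      unfolding sk_vert_def
    proof (intro conjI allI impI)
      show "length u = l" by fact
      show "\<forall>a\<in>set u. a \<le> d" proof -
        have "\<forall>a\<in>set w. a \<le> d" using vw unfolding wvalid_def by simp
        then show ?thesis using set_drop_subset[of k w] unfolding u_def by blast
      qed
    next
      fix i assume "i + 1 < l"
      then have "0 < k + i + 1 \<and> k + i + 1 < length w" using lw by simp
      moreover have V2w: "\<And>j. 0 < j \<Longrightarrow> j < length w \<Longrightarrow> w!j \<noteq> w!(j-1)" using vw unfolding wvalid_def by simp
      ultimately have "w ! (k + i + 1) \<noteq> w ! (k + i + 1 - 1)" by (intro V2w) simp_all
      moreover have "u ! i = w ! (k + i)" using nu[of i] \<open>i + 1 < l\<close> by simp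
      moreover have "u ! (i + 1) = w ! (k + i + 1)" using nu[of "i+1"] \<open>i + 1 < l\<close> by simp
      ultimately show "u ! i \<noteq> u ! (i + 1)" by simp
    qed
    have "z \<in> set w'" using ww by simp
    then have zd: "z \<le> d" using v1 by blast
    have "u \<noteq> []" using lu l by auto
    then have hu: "hd u = w ! k" using nu[of 0] l by (simp add: hd_conv_nth)
    have lau: "last u = w ! (l + k - 1)" using lu nu[of "l - 1"] l u_def lw
      by (simp add: last_conv_nth add.commute)
    have "l \<le> l+k \<and> l+k < length w'" using w'(1) by simp
    then have j1: "w' ! (l+k) \<noteq> w' ! (l+k-l)" using v3[of "l+k"] by simp
    have "0 < l+k \<and> l+k < length w'" using w'(1) l by simp
    then have j2: "w' ! (l+k) \<noteq> w' ! (l+k-1)" using v2[of "l+k"] by simp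
    have wz: "w' ! (l+k) = z" using ww lw by (simp add: nth_append)
    have wk: "w' ! k = w ! k" using ww lw l by (simp add: nth_append)
    have wk2: "w' ! (l+k-1) = w ! (l+k-1)" using ww lw l by (simp add: nth_append)
    have z1: "z \<noteq> hd u" using j1 wz wk hu by simp
    have z2: "z \<noteq> last u" using j2 wz wk2 lau by simp
    have "y = tl u @ [z]" using w'(3) ww u_def lw l by (simp add: drop_Suc tl_drop)
    then have "sk_arc d l u y" unfolding sk_arc_def using su zd z1 z2 by (intro conjI exI[of _ z]) simp_all
    then show "(sk_arc d l ^^ Suc k) x y" by (rule relpowp_Suc_I[OF pu])
  qed
qed


lemma build:
  assumes l: "l \<ge> 1" and t: "t \<le> l" and x: "sk_vert d l x" and y: "sk_vert d l y"
    and M: "\<forall>j<t. M j \<le> d \<and> M j \<noteq> x!j \<and> M j \<noteq> (if j = 0 then x!(l-1) else M (j-1))"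
    and A: "\<forall>i<l. t + i < l \<longrightarrow> y!i \<noteq> x!(t+i)"
    and B: "\<forall>i<l. l \<le> t + i \<longrightarrow> y!i \<noteq> M (t+i-l)"
    and C: "y!0 \<noteq> (if t = 0 then x!(l-1) else M (t-1))"
  shows "(sk_arc d l ^^ (l+t)) x y"
proof -
  have lx: "length x = l" and ly: "length y = l" using x y unfolding sk_vert_def by auto
  have dx: "\<And>j. j < l \<Longrightarrow> x!j \<le> d" using x lx unfolding sk_vert_def by auto
  have dy: "\<And>j. j < l \<Longrightarrow> y!j \<le> d" using y ly unfolding sk_vert_def by auto
  have ax: "\<And>i. i + 1 < l \<Longrightarrow> x!i \<noteq> x!(i+1)" using x unfolding sk_vert_def by auto
  have ay: "\<And>i. i + 1 < l \<Longrightarrow> y!i \<noteq> y!(i+1)" using y unfolding sk_vert_def by auto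
  define W where "W j = (if j < l then x!j else if j < l + t then M (j - l) else y!(j - l - t))" for j
  define w where "w = map W [0..<l + (l + t)]"
  have lw: "length w = l + (l + t)" unfolding w_def by simp
  have nw: "\<And>j. j < l + (l + t) \<Longrightarrow> w ! j = W j" unfolding w_def by simp
  have tk: "take l w = x"
    by (rule nth_equalityI) (auto simp: lw lx nw W_def)
  have dr: "drop (l + t) w = y"
    by (rule nth_equalityI) (auto simp: lw ly nw W_def)
  have vw: "wvalid d l w"
    unfolding wvalid_def
  proof (intro conjI allI impI)
    show "\<forall>a\<in>set w. a \<le> d"
    proof
      fix a assume "a \<in> set w"
      then obtain j where j: "j < l + (l + t)" "a = W j" unfolding w_def by auto
      show "a \<le> d"
      proof (cases "j < l")
        case True then show ?thesis using j dx unfolding W_def by simp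
      next
        case False
        show ?thesis
        proof (cases "j < l + t")
          case True then show ?thesis using j M False unfolding W_def by auto
        next
          case False2: False
          then have "j - l - t < l" using j by simp
          then show ?thesis using j dy False False2 unfolding W_def by simp
        qed
      qed
    qed
  next
    fix j assume j: "0 < j \<and> j < length w"
    show "w ! j \<noteq> w ! (j - 1)"
    proof -
      have jj: "j < l + (l + t)" using j lw by simp
      have "W j \<noteq> W (j - 1)"
      proof (cases "j < l")
        case True
        then have "x!(j-1) \<noteq> x!(j - 1 + 1)" using ax[of "j-1"] j by simp
        moreover have "j - 1 < l" using True by simp
        ultimately show ?thesis using True j unfolding W_def by simp
      next
        case False
        show ?thesis
        proof (cases "j < l + t")
          case True
          show ?thesis
          proof (cases "j = l")
            case True2: True
            then show ?thesis using M l \<open>j < l + t\<close> unfolding W_def by auto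
          next
            case False2: False
            then have "j - l < t" "j - l \<noteq> 0" "j - 1 - l = j - l - 1" "\<not> j - 1 < l" "j - 1 < l + t" using False True by auto
            then show ?thesis using M False True unfolding W_def by auto
          qed
        next
          case False3: False
          show ?thesis
          proof (cases "j = l + t")
            case True
            show ?thesis
            proof (cases "t = 0")
              case True then show ?thesis using C \<open>j = l + t\<close> l unfolding W_def by simp
            next
              case False
              then have "\<not> j - 1 < l" "j - 1 < l + t" "j - 1 - l = t - 1" using \<open>j = l + t\<close> by auto
              then show ?thesis using C False \<open>j = l + t\<close> unfolding W_def by simp
            qed
          next
            case False
            then have i: "j - 1 - l - t + 1 < l" "j - l - t = j - 1 - l - t + 1" "\<not> j - 1 < l + t" using False3 jj by auto
            then have "y!(j - 1 - l - t) \<noteq> y!(j - 1 - l - t + 1)" using ay by blast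
            then show ?thesis using i False3 unfolding W_def by simp
          qed
        qed
      qed
      then show ?thesis using nw jj by simp
    qed
  next
    fix j assume j: "l \<le> j \<and> j < length w"
    show "w ! j \<noteq> w ! (j - l)"
    proof -
      have jj: "j < l + (l + t)" using j lw by simp
      have "W j \<noteq> W (j - l)"
      proof (cases "j < l + t")
        case True
        then have "j - l < t" "j - l < l" "\<not> j < l" using j t by auto
        then show ?thesis using M True unfolding W_def by auto
      next
        case False
        define i where "i = j - l - t"
        have i: "i < l" "j - l = t + i" using False jj j unfolding i_def by auto
        have Wj: "W j = y!i" using False unfolding W_def i_def by simp
        show ?thesis
        proof (cases "t + i < l")
          case True
          have "W (j - l) = x!(t+i)" using i True unfolding W_def by simp
          then show ?thesis using A i True Wj by simp
        next
          case False2: False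
          then have "t + i < l + t" using i by simp
          then have "W (j - l) = M (t + i - l)" using i False2 unfolding W_def by simp
          then show ?thesis using B i False2 Wj by simp
        qed
      qed
      then show ?thesis using nw jj j by simp
    qed
  qed
  show ?thesis
    using lw tk dr vw by (intro walk_word[OF l x, THEN iffD2]) blast
qed


lemma card3_le: "card {p, q, r::nat} \<le> 3"
  using card_length[of "[p,q,r]"] by simp

lemma pigeon4:
  fixes A B C E d :: nat
  assumes d: "d \<ge> 3" and h: "\<forall>f\<le>d. f = A \<or> f = B \<or> f = C \<or> f = E"
  shows "A \<noteq> B \<and> A \<noteq> C \<and> A \<noteq> E \<and> B \<noteq> C \<and> B \<noteq> E \<and> C \<noteq> E \<and> E \<le> d"
proof -
  have sub: "{0..d} \<subseteq> {A,B,C,E}"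
  proof
    fix f assume "f \<in> {0..d}" then have "f \<le> d" by simp
    then show "f \<in> {A,B,C,E}" using h[rule_format, of f] by simp
  qed
  have c4: "card {0..d} \<ge> 4" using d by simp
  have c: "card {A,B,C,E} \<ge> 4" using card_mono[OF _ sub] c4 by simp
  have "A \<noteq> B" proof assume "A = B" then have "{A,B,C,E} = {B,C,E}" by auto
    then show False using c card3_le[of B C E] by simp qed
  moreover have "A \<noteq> C" proof assume "A = C" then have "{A,B,C,E} = {B,C,E}" by auto
    then show False using c card3_le[of B C E] by simp qed
  moreover have "A \<noteq> E" proof assume "A = E" then have "{A,B,C,E} = {B,C,E}" by auto
    then show False using c card3_le[of B C E] by simp qed
  moreover have "B \<noteq> C" proof assume "B = C" then have "{A,B,C,E} = {A,C,E}" by auto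
    then show False using c card3_le[of A C E] by simp qed
  moreover have "B \<noteq> E" proof assume "B = E" then have "{A,B,C,E} = {A,C,E}" by auto
    then show False using c card3_le[of A C E] by simp qed
  moreover have "C \<noteq> E" proof assume "C = E" then have "{A,B,C,E} = {A,B,E}" by auto
    then show False using c card3_le[of A B E] by simp qed
  moreover have "E \<le> d"
  proof (rule ccontr)
    assume "\<not> E \<le> d"
    have "{0..d} \<subseteq> {A,B,C}"
    proof
      fix f assume "f \<in> {0..d}" then have "f \<le> d" by simp
      then have "f \<noteq> E" using \<open>\<not> E \<le> d\<close> by auto
      then show "f \<in> {A,B,C}" using h[rule_format, of f] \<open>f \<le> d\<close> by simp
    qed
    then have "card {0..d} \<le> card {A,B,C}" by (rule card_mono[rotated]) simp
    also have "\<dots> \<le> 3" by (rule card3_le)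
    finally show False using c4 by simp
  qed
  ultimately show ?thesis by simp
qed

definition col :: "nat \<Rightarrow> (nat \<Rightarrow> nat) \<Rightarrow> (nat \<Rightarrow> nat) \<Rightarrow> nat \<Rightarrow> nat \<Rightarrow> (nat \<Rightarrow> nat) \<Rightarrow> bool" where
  "col d X Y a n m \<longleftrightarrow> (\<forall>j<n. m j \<le> d \<and> m j \<noteq> X j \<and> m j \<noteq> Y j \<and> m j \<noteq> (if j = 0 then a else m (j - 1)))"

definition chain :: "nat \<Rightarrow> (nat \<Rightarrow> nat) \<Rightarrow> (nat \<Rightarrow> nat) \<Rightarrow> nat \<Rightarrow> nat \<Rightarrow> (nat \<Rightarrow> nat) \<Rightarrow> bool" where
  "chain d X Y a n c \<longleftrightarrow> c 0 = a \<and> (\<forall>j<n. c (Suc j) \<le> d \<and> c (Suc j) \<noteq> X j \<and> c (Suc j) \<noteq> Y j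
      \<and> c (Suc j) \<noteq> c j \<and> c j \<noteq> X j \<and> c j \<noteq> Y j \<and> X j \<noteq> Y j)"

lemma coloring:
  assumes d: "d \<ge> 3"
  shows "(0 < n \<and> (\<forall>e. \<exists>m. col d X Y a n m \<and> m (n - 1) \<noteq> e)) \<or> (\<exists>c. chain d X Y a n c)"
proof (induction n)
  case 0
  have "chain d X Y a 0 (\<lambda>_. a)" unfolding chain_def by simp
  then show ?case by blast
next
  case (Suc n)
  have avoid3: "\<exists>f\<le>d. f \<noteq> p \<and> f \<noteq> q \<and> f \<noteq> r" for p q r :: nat
  proof (rule ccontr)
    assume "\<not> ?thesis"
    then have "\<forall>f\<le>d. f = p \<or> f = q \<or> f = r \<or> f = r" by auto
    from pigeon4[OF d this] show False by simp
  qed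
  from Suc.IH show ?case
  proof
    assume a: "0 < n \<and> (\<forall>e. \<exists>m. col d X Y a n m \<and> m (n - 1) \<noteq> e)"
    have "\<exists>m. col d X Y a (Suc n) m \<and> m (Suc n - 1) \<noteq> e" for e
    proof -
      obtain f where f: "f \<le> d" "f \<noteq> X n" "f \<noteq> Y n" "f \<noteq> e" using avoid3 by blast
      obtain m where m: "col d X Y a n m" "m (n - 1) \<noteq> f" using a by blast
      have "col d X Y a (Suc n) (m(n := f))"
        unfolding col_def
      proof (intro allI impI)
        fix j assume j: "j < Suc n"
        show "(m(n := f)) j \<le> d \<and> (m(n := f)) j \<noteq> X j \<and> (m(n := f)) j \<noteq> Y j \<and>
          (m(n := f)) j \<noteq> (if j = 0 then a else (m(n := f)) (j - 1))"
        proof (cases "j = n")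
          case True then show ?thesis using f m(2) a by auto
        next
          case False then have "j < n" using j by simp
          then show ?thesis using m(1) False unfolding col_def by auto
        qed
      qed
      then show ?thesis using f(4) by (intro exI[of _ "m(n := f)"]) simp
    qed
    then show ?thesis by simp
  next
    assume "\<exists>c. chain d X Y a n c"
    then obtain c where c: "chain d X Y a n c" by blast
    show ?thesis
    proof (cases "\<forall>e. \<exists>f\<le>d. f \<noteq> X n \<and> f \<noteq> Y n \<and> f \<noteq> c n \<and> f \<noteq> e")
      case True
      have "\<exists>m. col d X Y a (Suc n) m \<and> m (Suc n - 1) \<noteq> e" for e
      proof -
        obtain f where f: "f \<le> d" "f \<noteq> X n" "f \<noteq> Y n" "f \<noteq> c n" "f \<noteq> e" using True by blast
        define m where "m = (\<lambda>j. if j < n then c (Suc j) else f)"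
        have "col d X Y a (Suc n) m"
          unfolding col_def
        proof (intro allI impI)
          fix j assume j: "j < Suc n"
          show "m j \<le> d \<and> m j \<noteq> X j \<and> m j \<noteq> Y j \<and> m j \<noteq> (if j = 0 then a else m (j - 1))"
          proof (cases "j = n")
            case True
            have prev: "(if j = 0 then a else m (j - 1)) = c n"
            proof (cases "n = 0")
              case True then show ?thesis using c \<open>j = n\<close> unfolding chain_def by simp
            next
              case False then have "j - 1 < n" "Suc (j - 1) = n" using \<open>j = n\<close> by auto
              then show ?thesis using False \<open>j = n\<close> unfolding m_def by simp
            qed
            have "m j = f" using True unfolding m_def by simp
            then show ?thesis using f prev True by simp
          next
            case False then have jn: "j < n" using j by simp
            then have cj: "c (Suc j) \<le> d \<and> c (Suc j) \<noteq> X j \<and> c (Suc j) \<noteq> Y j \<and> c (Suc j) \<noteq> c j"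
              using c unfolding chain_def by blast
            have prev: "(if j = 0 then a else m (j - 1)) = c j"
            proof (cases "j = 0")
              case True then show ?thesis using c unfolding chain_def by simp
            next
              case False then have "j - 1 < n" "Suc (j - 1) = j" using jn by auto
              then show ?thesis using False unfolding m_def by simp
            qed
            have "m j = c (Suc j)" using jn unfolding m_def by simp
            then show ?thesis using cj prev by simp
          qed
        qed
        then show ?thesis using f(5) unfolding m_def by (intro exI[of _ m]) (simp add: m_def)
      qed
      then show ?thesis by simp
    next
      case False
      then obtain e where e: "\<forall>f\<le>d. f = X n \<or> f = Y n \<or> f = c n \<or> f = e" by blast
      from pigeon4[OF d e] have p: "X n \<noteq> Y n \<and> X n \<noteq> c n \<and> X n \<noteq> e \<and> Y n \<noteq> c n \<and> Y n \<noteq> e \<and> c n \<noteq> e \<and> e \<le> d" .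
      have c0: "(c(Suc n := e)) 0 = a" using c unfolding chain_def by simp
      have cs: "\<forall>j<Suc n. (c(Suc n := e)) (Suc j) \<le> d \<and> (c(Suc n := e)) (Suc j) \<noteq> X j \<and>
           (c(Suc n := e)) (Suc j) \<noteq> Y j \<and> (c(Suc n := e)) (Suc j) \<noteq> (c(Suc n := e)) j \<and>
           (c(Suc n := e)) j \<noteq> X j \<and> (c(Suc n := e)) j \<noteq> Y j \<and> X j \<noteq> Y j"
      proof (intro allI impI)
        fix j assume j: "j < Suc n"
        show "(c(Suc n := e)) (Suc j) \<le> d \<and> (c(Suc n := e)) (Suc j) \<noteq> X j \<and>
           (c(Suc n := e)) (Suc j) \<noteq> Y j \<and> (c(Suc n := e)) (Suc j) \<noteq> (c(Suc n := e)) j \<and>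
           (c(Suc n := e)) j \<noteq> X j \<and> (c(Suc n := e)) j \<noteq> Y j \<and> X j \<noteq> Y j"
        proof (cases "j = n")
          case True then show ?thesis using p by simp
        next
          case False then have "j < n" using j by simp
          then show ?thesis using c unfolding chain_def by simp
        qed
      qed
      have "chain d X Y a (Suc n) (c(Suc n := e))" unfolding chain_def using c0 cs by blast
      then show ?thesis by blast
    qed
  qed
qed


lemma upper:
  assumes d: "d \<ge> 3" and l: "l \<ge> 1" and x: "sk_vert d l x" and y: "sk_vert d l y"
  shows "\<exists>k\<le>2*l. (sk_arc d l ^^ k) x y"
proof -
  let ?X = "\<lambda>j. x!j" and ?Y = "\<lambda>j. y!j" and ?a = "x!(l-1)"
  from coloring[OF d, of l ?X ?Y ?a]
  show ?thesis
  proof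
    assume "0 < l \<and> (\<forall>e. \<exists>m. col d ?X ?Y ?a l m \<and> m (l - 1) \<noteq> e)"
    then obtain m where m: "col d ?X ?Y ?a l m" "m (l - 1) \<noteq> y!0" by blast
    have M: "\<forall>j<l. m j \<le> d \<and> m j \<noteq> x!j \<and> m j \<noteq> (if j = 0 then x!(l-1) else m (j-1))"
      using m(1) unfolding col_def by simp
    have A: "\<forall>i<l. l + i < l \<longrightarrow> y!i \<noteq> x!(l+i)" by simp
    have B: "\<forall>i<l. l \<le> l + i \<longrightarrow> y!i \<noteq> m (l+i-l)" using m(1) unfolding col_def by auto
    have C: "y!0 \<noteq> (if l = 0 then x!(l-1) else m (l-1))" using m(2) l by simp
    have "(sk_arc d l ^^ (l+l)) x y" by (rule build[OF l _ x y M A B C]) simp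
    then show ?thesis by (intro exI[of _ "l+l"]) simp
  next
    assume "\<exists>c. chain d ?X ?Y ?a l c"
    then obtain c where c0: "c 0 = x!(l-1)" and cs: "\<And>j. j < l \<Longrightarrow> c (Suc j) \<le> d \<and> c (Suc j) \<noteq> x!j \<and> c (Suc j) \<noteq> y!j
      \<and> c (Suc j) \<noteq> c j \<and> c j \<noteq> x!j \<and> c j \<noteq> y!j \<and> x!j \<noteq> y!j"
      unfolding chain_def by blast
    let ?M = "\<lambda>j. c (Suc j)"
    show ?thesis
    proof (cases "c l = y!0")
      case False
      have M: "\<forall>j<l. ?M j \<le> d \<and> ?M j \<noteq> x!j \<and> ?M j \<noteq> (if j = 0 then x!(l-1) else ?M (j-1))"
      proof (intro allI impI)
        fix j assume j: "j < l"
        show "?M j \<le> d \<and> ?M j \<noteq> x!j \<and> ?M j \<noteq> (if j = 0 then x!(l-1) else ?M (j-1))"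
        proof (cases j)
          case 0 then show ?thesis using cs[of 0] c0 j by simp
        next
          case (Suc i) then show ?thesis using cs[of j] j by simp
        qed
      qed
      have A: "\<forall>i<l. l + i < l \<longrightarrow> y!i \<noteq> x!(l+i)" by simp
      have B: "\<forall>i<l. l \<le> l + i \<longrightarrow> y!i \<noteq> ?M (l+i-l)"
      proof (intro allI impI)
        fix i assume "i < l" then show "y!i \<noteq> ?M (l+i-l)" using cs[of i] by simp
      qed
      have C: "y!0 \<noteq> (if l = 0 then x!(l-1) else ?M (l-1))" using False l by simp
      have "(sk_arc d l ^^ (l+l)) x y" by (rule build[OF l _ x y M A B C]) simp
      then show ?thesis by (intro exI[of _ "l+l"]) simp
    next
      case True
      have cl: "c l \<noteq> x!(l-1)" "c l \<noteq> c (l-1)" using cs[of "l-1"] l by simp_all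
      have M: "\<forall>j<l-1. ?M j \<le> d \<and> ?M j \<noteq> x!j \<and> ?M j \<noteq> (if j = 0 then x!(l-1) else ?M (j-1))"
      proof (intro allI impI)
        fix j assume j: "j < l-1"
        show "?M j \<le> d \<and> ?M j \<noteq> x!j \<and> ?M j \<noteq> (if j = 0 then x!(l-1) else ?M (j-1))"
        proof (cases j)
          case 0 then show ?thesis using cs[of 0] c0 j by simp
        next
          case (Suc i) then show ?thesis using cs[of j] j by simp
        qed
      qed
      have A: "\<forall>i<l. l - 1 + i < l \<longrightarrow> y!i \<noteq> x!(l - 1 + i)"
      proof (intro allI impI)
        fix i assume "i < l" "l - 1 + i < l"
        then have "i = 0" by simp
        then show "y!i \<noteq> x!(l - 1 + i)" using True cl by simp
      qed
      have B: "\<forall>i<l. l \<le> l - 1 + i \<longrightarrow> y!i \<noteq> ?M (l - 1 + i - l)"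
      proof (intro allI impI)
        fix i assume i: "i < l" "l \<le> l - 1 + i"
        then have "Suc (l - 1 + i - l) = i" using l by simp
        then show "y!i \<noteq> ?M (l - 1 + i - l)" using cs[of i] i by simp
      qed
      have C: "y!0 \<noteq> (if l - 1 = 0 then x!(l-1) else ?M (l - 1 - 1))"
      proof (cases "l - 1 = 0")
        case True then show ?thesis using cl \<open>c l = y!0\<close> by simp
      next
        case False then have "Suc (l - 1 - 1) = l - 1" by simp
        then show ?thesis using cl \<open>c l = y!0\<close> False by simp
      qed
      have "(sk_arc d l ^^ (l + (l - 1))) x y" by (rule build[OF l _ x y M A B C]) simp
      then show ?thesis by (intro exI[of _ "l + (l - 1)"]) simp
    qed
  qed
qed


definition XE :: "nat \<Rightarrow> nat \<Rightarrow> nat" where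
  "XE l j = (if j = l - 1 then 2 else j mod 2)"
definition YE :: "nat \<Rightarrow> nat" where
  "YE i = (if i = 0 then 2 else (i - 1) mod 2)"

lemma walk_facts:
  assumes l: "l \<ge> 1" and x: "sk_vert d l x" and p: "(sk_arc d l ^^ k) x y"
  obtains w where "\<And>j. j < l \<Longrightarrow> w!j = x!j" "\<And>i. i < l \<Longrightarrow> w!(k+i) = y!i"
    "\<And>j. 0 < j \<Longrightarrow> j < l + k \<Longrightarrow> w!j \<noteq> w!(j-1)"
    "\<And>j. l \<le> j \<Longrightarrow> j < l + k \<Longrightarrow> w!j \<noteq> w!(j-l)"
    "\<And>j. j < l + k \<Longrightarrow> w!j \<le> d"
proof -
  obtain w where w: "length w = l + k" "take l w = x" "drop k w = y" "wvalid d l w"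
    using walk_word[OF l x, THEN iffD1, OF p] by blast
  show ?thesis
  proof (rule that[of w])
    fix j assume "j < l" then show "w!j = x!j" using w(2)[symmetric] by simp
  next
    fix i assume "i < l" then show "w!(k+i) = y!i" using w(3)[symmetric] w(1) by simp
  next
    fix j assume "0 < j" "j < l + k" then show "w!j \<noteq> w!(j-1)" using w(1,4) unfolding wvalid_def by simp
  next
    fix j assume "l \<le> j" "j < l + k" then show "w!j \<noteq> w!(j-l)" using w(1,4) unfolding wvalid_def by simp
  next
    fix j assume "j < l + k" then show "w!j \<le> d" using w(1,4) unfolding wvalid_def by simp
  qed
qed

lemma lower_even:
  assumes l2: "l \<ge> 2" and ev: "even l" and d: "d \<ge> 3" and ld: "l = 2 \<or> d = 3"
    and k: "k < 2 * l"
    and p: "(sk_arc d l ^^ k) (map (XE l) [0..<l]) (map YE [0..<l])"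
    and xv: "sk_vert d l (map (XE l) [0..<l])"
  shows False
proof -
  obtain w where Wx: "\<And>j. j < l \<Longrightarrow> w!j = XE l j" and Wy: "\<And>i. i < l \<Longrightarrow> w!(k+i) = YE i"
    and adj: "\<And>j. 0 < j \<Longrightarrow> j < l + k \<Longrightarrow> w!j \<noteq> w!(j-1)"
    and sh: "\<And>j. l \<le> j \<Longrightarrow> j < l + k \<Longrightarrow> w!j \<noteq> w!(j-l)"
    and bd: "\<And>j. j < l + k \<Longrightarrow> w!j \<le> d"
    using walk_facts[OF _ xv p] l2 by auto
  have X1: "XE l (l - 1) = 2" by (simp add: XE_def)
  have Xo: "XE l j = j mod 2" if "j < l - 1" for j using that by (simp add: XE_def)
  have Y0: "YE 0 = 2" by (simp add: YE_def)
  have Yo: "YE i = (i - 1) mod 2" if "i > 0" for i using that by (simp add: YE_def)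
  show False
  proof (cases "k < l")
    case True
    show False
    proof (cases "k = 0")
      case True
      then show False using Wx[of 0] Wy[of 0] l2 Xo[of 0] Y0 by simp
    next
      case False
      have "w!k = 2" using Wy[of 0] Y0 l2 by simp
      moreover have "w!k = XE l k" using Wx \<open>k < l\<close> by simp
      ultimately have kl: "k = l - 1" using Xo[of k] \<open>k < l\<close> by (cases "k = l - 1") auto
      have "w!l \<noteq> w!(l - l)" using sh[of l] False by simp
      moreover have "w!l = YE 1" using Wy[of 1] kl l2 by simp
      moreover have "w!0 = XE l 0" using Wx[of 0] l2 by simp
      ultimately show False using Yo[of 1] Xo[of 0] l2 by simp
    qed
  next
    case False
    define t where "t = k - l"
    have kt: "k = l + t" "t < l" using False k unfolding t_def by auto
    show False
    proof (cases "odd t")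
      case True
      show False
      proof (cases "t = l - 1")
        case True
        have "w!k \<noteq> w!(k-l)" using sh[of k] kt l2 by simp
        then show False using Wy[of 0] Y0 Wx[of "l-1"] X1 True kt l2 by simp
      next
        case False
        have "t + 1 < l - 1" using False \<open>odd t\<close> ev kt by presburger
        have "w!(k+1) \<noteq> w!(k+1-l)" using sh[of "k+1"] kt l2 by simp
        moreover have "w!(k+1) = 0" using Wy[of 1] Yo[of 1] l2 by simp
        moreover have "w!(k+1-l) = 0" using Wx[of "t+1"] Xo[of "t+1"] \<open>t + 1 < l - 1\<close> kt \<open>odd t\<close>
          by (simp add: add.commute)
        ultimately show False by simp
      qed
    next
      case False
      then have et: "even t" by simp
      show False
      proof (cases "t = 0")
        case True
        have "w!l \<noteq> w!(l-1)" using adj[of l] kt True l2 by simp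
        then show False using Wy[of 0] Y0 Wx[of "l-1"] X1 kt True l2 by simp
      next
        case False
        then have t2: "t \<ge> 2" "t \<le> l - 2" using et kt ev by presburger+
        then have d3: "d = 3" using ld by (cases "l = 2") auto
        have claim: "w!(l+j) = (if even j then 3 else 2)" if "j < t" for j
          using that
        proof (induction j)
          case 0
          have a1: "w!l \<noteq> w!0" using sh[of l] kt t2 by simp
          have a2: "w!(2*l) \<noteq> w!(2*l-l)" using sh[of "2*l"] kt t2 by simp
          have a3: "w!l \<noteq> w!(l-1)" using adj[of l] kt t2 by simp
          have b1: "w!0 = 0" using Wx[of 0] Xo[of 0] t2 kt by simp
          have "w!(2*l) = w!(k + (l - t))" using kt by (simp add: mult_2)
          also have "\<dots> = YE (l - t)" using Wy[of "l-t"] t2 by simp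
          also have "\<dots> = (l - t - 1) mod 2" using Yo[of "l-t"] t2 by simp
          also have "\<dots> = 1"
          proof -
            have "even (l - t)" using ev et t2 by (simp add: even_diff_nat)
            then obtain c where c: "l - t = 2 * c" by blast
            then have "c \<ge> 1" using t2 by simp
            then have "l - t - 1 = 2 * (c - 1) + 1" using c by simp
            then show ?thesis by simp
          qed
          finally have b2: "w!(2*l) = 1" .
          have b3: "w!(l-1) = 2" using Wx[of "l-1"] X1 l2 by simp
          have "w!l \<le> 3" using bd[of l] d3 kt t2 by simp
          then show ?case using a1 a2 a3 b1 b2 b3 by simp
        next
          case (Suc j)
          have IH: "w!(l+j) = (if even j then 3 else 2)" using Suc by simp
          have a1: "w!(l+Suc j) \<noteq> w!(Suc j)" using sh[of "l + Suc j"] kt Suc.prems by simp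
          have e2: "2*l+Suc j - l = l + Suc j" by simp
          have a2: "w!(2*l+Suc j) \<noteq> w!(l+Suc j)" using sh[of "2*l+Suc j"] kt Suc.prems e2 by simp
          have a3: "w!(l+Suc j) \<noteq> w!(l+j)" using adj[of "l+Suc j"] kt Suc.prems by simp
          have b1: "w!(Suc j) = Suc j mod 2" using Wx[of "Suc j"] Xo[of "Suc j"] t2 Suc.prems kt by simp
          have "w!(2*l+Suc j) = w!(k + (l - t + Suc j))" using kt Suc.prems by (simp add: mult_2 add.assoc)
          also have "\<dots> = YE (l - t + Suc j)" using Wy[of "l - t + Suc j"] t2 Suc.prems kt by simp
          also have "\<dots> = (l - t + Suc j - 1) mod 2" using Yo[of "l - t + Suc j"] by simp
          also have "\<dots> = j mod 2"
          proof -
            have "even (l - t)" using ev et t2 by (simp add: even_diff_nat)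
            then obtain c where c: "l - t = 2 * c" by blast
            then have "l - t + Suc j - 1 = 2 * c + j" by simp
            then show ?thesis by simp
          qed
          finally have b2: "w!(2*l+Suc j) = j mod 2" .
          have bd3: "w!(l + Suc j) \<le> 3" using bd[of "l + Suc j"] d3 kt Suc.prems by simp
          show ?case
          proof (cases "even j")
            case True
            then have "Suc j mod 2 = 1" "j mod 2 = 0" by presburger+
            then show ?thesis using a1 a2 a3 b1 b2 IH bd3 True by simp
          next
            case False
            then have "Suc j mod 2 = 0" "j mod 2 = 1" by presburger+
            then show ?thesis using a1 a2 a3 b1 b2 IH bd3 False by simp
          qed
        qed
        have "w!(l+t) \<noteq> w!(l+t-1)" using adj[of "l+t"] kt t2 by simp
        moreover have "w!(l+t) = 2" using Wy[of 0] Y0 kt l2 by simp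
        moreover have "w!(l+t-1) = 2"
        proof -
          have e: "l + (t - 1) = l + t - 1" "t - 1 < t" "odd (t - 1)" using t2 et by presburger+
          show ?thesis using claim[of "t-1"] e by simp
        qed
        ultimately show False by simp
      qed
    qed
  qed
qed


definition XO :: "nat \<Rightarrow> nat \<Rightarrow> nat" where
  "XO l j = (if j = l - 1 then 1 else if j = l - 2 then 2 else j mod 2)"
definition YO :: "nat \<Rightarrow> nat \<Rightarrow> nat" where
  "YO l i = (if i = 0 then 1 else if i = 1 then 2 else if i = 2 then 3 else if i = l - 1 then 2 else (i + 1) mod 2)"

lemma lower_odd:
  assumes l5: "l \<ge> 5" and od: "odd l" and d: "d = 3"
    and k: "k < 2 * l"
    and p: "(sk_arc d l ^^ k) (map (XO l) [0..<l]) (map (YO l) [0..<l])"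
    and xv: "sk_vert d l (map (XO l) [0..<l])"
  shows False
proof -
  obtain w where Wx0: "\<And>j. j < l \<Longrightarrow> w!j = map (XO l) [0..<l] ! j"
    and Wy0: "\<And>i. i < l \<Longrightarrow> w!(k+i) = map (YO l) [0..<l] ! i"
    and adj: "\<And>j. 0 < j \<Longrightarrow> j < l + k \<Longrightarrow> w!j \<noteq> w!(j-1)"
    and sh: "\<And>j. l \<le> j \<Longrightarrow> j < l + k \<Longrightarrow> w!j \<noteq> w!(j-l)"
    and bd: "\<And>j. j < l + k \<Longrightarrow> w!j \<le> d"
    using walk_facts[OF _ xv p] l5 by auto
  have Wx: "\<And>j. j < l \<Longrightarrow> w!j = XO l j" using Wx0 by simp
  have Wy: "\<And>i. i < l \<Longrightarrow> w!(k+i) = YO l i" using Wy0 by simp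
  obtain m0 where m0: "l = 2 * m0 + 1" using od by (rule oddE)
  define q where "q = m0 - 2"
  have lq: "l = 2 * q + 5" using m0 l5 unfolding q_def by simp
  have X1: "XO l (l - 1) = 1" by (simp add: XO_def)
  have X2: "XO l (l - 2) = 2" using l5 by (simp add: XO_def)
  have Xo: "XO l j = j mod 2" if "j < l - 2" for j using that by (simp add: XO_def)
  have Y0: "YO l 0 = 1" by (simp add: YO_def)
  have Y1: "YO l 1 = 2" by (simp add: YO_def)
  have Y2: "YO l 2 = 3" by (simp add: YO_def)
  have Yl: "YO l (l - 1) = 2" using l5 by (simp add: YO_def)
  have Yo: "YO l i = (i + 1) mod 2" if "3 \<le> i" "i < l - 1" for i using that by (simp add: YO_def)
  show False
  proof (cases "k < l")
    case True
    show False
    proof (cases "k = 0")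
      case True
      then show False using Wx[of 0] Wy[of 0] l5 Xo[of 0] Y0 by simp
    next
      case False
      have wk: "w!k = 1" using Wy[of 0] Y0 l5 by simp
      have wk2: "w!k = XO l k" using Wx \<open>k < l\<close> by simp
      show False
      proof (cases "k = l - 1")
        case True
        have "w!(l+2) \<noteq> w!(l + 2 - l)" using sh[of "l+2"] True l5 by simp
        moreover have "w!(l+2) = 0"
        proof -
          have "w!(l+2) = w!(k+3)" using True l5 by simp
          also have "\<dots> = YO l 3" using Wy[of 3] l5 by simp
          also have "\<dots> = 0" using Yo[of 3] l5 by simp
          finally show ?thesis .
        qed
        moreover have "w!2 = 0" using Wx[of 2] Xo[of 2] l5 by simp
        ultimately show False by simp
      next
        case False2: False
        have "k \<noteq> l - 2" using wk wk2 X2 by auto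
        then have kl: "k < l - 2" using False2 \<open>k < l\<close> by simp
        then have "k mod 2 = 1" using wk wk2 Xo[of k] by simp
        have "w!(k+1) = 2" using Wy[of 1] Y1 l5 by simp
        moreover have "w!(k+1) = XO l (k+1)" using Wx[of "k+1"] kl by simp
        ultimately have "XO l (k + 1) = 2" by simp
        moreover have "k + 1 \<noteq> l - 2"
        proof
          assume "k + 1 = l - 2" then have "k = 2 * q + 2" using lq by simp
          then show False using \<open>k mod 2 = 1\<close> by simp
        qed
        ultimately have "XO l (k+1) = 2" "k + 1 < l - 2" using kl by auto
        then show False using Xo[of "k+1"] by simp
      qed
    qed
  next
    case False
    define t where "t = k - l"
    have kt: "k = l + t" "t < l" using False k unfolding t_def by auto
    have wk: "w!k = 1" using Wy[of 0] Y0 l5 by simp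
    consider (a) "t = l - 1" | (b) "t = l - 2" | (c) "t = l - 3" | (d) "t = 0"
      | (e) "odd t" "t < l - 2" | (f) "even t" "2 \<le> t" "t < l - 3"
    proof -
      have "t = l - 1 \<or> t = l - 2 \<or> t = l - 3 \<or> t = 0 \<or> (odd t \<and> t < l - 2) \<or> (even t \<and> 2 \<le> t \<and> t < l - 3)"
      proof (cases "t < l - 3")
        case True
        show ?thesis
        proof (cases "t = 0")
          case False
          show ?thesis
          proof (cases "even t")
            case True
            then have "t \<noteq> 1" by auto
            then have "2 \<le> t" using False by simp
            then show ?thesis using True \<open>t < l - 3\<close> by simp
          next
            case False
            moreover have "t < l - 2" using \<open>t < l - 3\<close> by simp
            ultimately show ?thesis by simp
          qed
        qed simp
      next
        case False
        then show ?thesis using kt(2) by auto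
      qed
      then show ?thesis using that by blast
    qed
    then show False
    proof cases
      case a
      have "w!k \<noteq> w!(k-l)" using sh[of k] kt by simp
      then show False using wk Wx[of "l-1"] X1 a kt l5 by simp
    next
      case d
      have "w!l \<noteq> w!(l-1)" using adj[of l] l5 kt by simp
      then show False using wk Wx[of "l-1"] X1 kt d by simp
    next
      case e
      have "w!k \<noteq> w!(k-l)" using sh[of k] kt by simp
      moreover have "w!(k-l) = 1" using Wx[of t] Xo[of t] e kt \<open>odd t\<close> by (simp add: odd_iff_mod_2_eq_one)
      ultimately show False using wk by simp
    next
      case c
      have "w!(k+1) \<noteq> w!(k+1-l)" using sh[of "k+1"] kt l5 by simp
      moreover have "w!(k+1) = 2" using Wy[of 1] Y1 l5 by simp
      moreover have "k + 1 - l = l - 2" using c kt l5 by simp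
      ultimately show False using Wx[of "l-2"] X2 l5 by simp
    next
      case f
      define i where "i = l - 1 - t"
      have i: "3 \<le> i" "i < l - 1" "k + i = 2 * l - 1" "i < l" "t + i = l - 1" using f kt l5 unfolding i_def by auto
      have "w!(k+i) \<noteq> w!(l-1)" using sh[of "k+i"] i kt by simp
      moreover have "w!(k+i) = 1"
      proof -
        have "w!(k+i) = (i + 1) mod 2" using Wy[of i] Yo[of i] i by simp
        moreover have "i + 1 = 2 * (q + 2 - t div 2) + 1"
        proof -
          obtain s where s: "t = 2 * s" using f(1) by blast
          then have "s \<le> q + 2" using f lq by simp
          then show ?thesis using s lq unfolding i_def by simp
        qed
        ultimately show ?thesis by simp
      qed
      ultimately show False using Wx[of "l-1"] X1 l5 by simp
    next
      case b
      have claim: "w!(l+j) = (if even j then 2 else 3)" if "j \<le> l - 4" for j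
        using that
      proof (induction j)
        case 0
        have a1: "w!l \<noteq> w!0" using sh[of l] kt b l5 by simp
        have a2: "w!(l+l) \<noteq> w!(l+l-l)" using sh[of "l+l"] kt b l5 by simp
        have a3: "w!l \<noteq> w!(l-1)" using adj[of l] kt l5 by simp
        have b1: "w!0 = 0" using Wx[of 0] Xo[of 0] l5 by simp
        have e: "l + l = k + 2" using kt b l5 by simp
        have "w!(l+l) = w!(k + 2)" by (simp only: e)
        also have "\<dots> = 3" using Wy[of 2] Y2 l5 by simp
        finally have b2: "w!(l+l) = 3" .
        have b3: "w!(l-1) = 1" using Wx[of "l-1"] X1 l5 by simp
        have "w!l \<le> 3" using bd[of l] d kt l5 by simp
        then show ?case using a1 a2 a3 b1 b2 b3 by simp
      next
        case (Suc j)
        have IH: "w!(l+j) = (if even j then 2 else 3)" using Suc by simp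
        have a1: "w!(l+Suc j) \<noteq> w!(Suc j)" using sh[of "l + Suc j"] kt b Suc.prems by simp
        have e2: "l+l+Suc j - l = l + Suc j" by simp
        have a2: "w!(l+l+Suc j) \<noteq> w!(l+Suc j)" using sh[of "l+l+Suc j"] kt b Suc.prems e2 by simp
        have a3: "w!(l+Suc j) \<noteq> w!(l+j)" using adj[of "l+Suc j"] kt Suc.prems by simp
        have b1: "w!(Suc j) = Suc j mod 2" using Wx[of "Suc j"] Xo[of "Suc j"] Suc.prems by simp
        have e: "l+l+Suc j = k + (Suc j + 2)" using kt b Suc.prems l5 by simp
        have "w!(l+l+Suc j) = w!(k + (Suc j + 2))" by (simp only: e)
        also have "\<dots> = YO l (Suc j + 2)" using Wy[of "Suc j + 2"] Suc.prems l5 by simp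
        also have "\<dots> = (Suc j + 2 + 1) mod 2" using Yo[of "Suc j + 2"] Suc.prems l5 by simp
        also have "\<dots> = j mod 2" by presburger
        finally have b2: "w!(l+l+Suc j) = j mod 2" .
        have bd3: "w!(l + Suc j) \<le> 3" using bd[of "l + Suc j"] d kt Suc.prems by simp
        show ?case
        proof (cases "even j")
          case True
          then have "Suc j mod 2 = 1" "j mod 2 = 0" by presburger+
          then show ?thesis using a1 a2 a3 b1 b2 IH bd3 True by simp
        next
          case False
          then have "Suc j mod 2 = 0" "j mod 2 = 1" by presburger+
          then show ?thesis using a1 a2 a3 b1 b2 IH bd3 False by simp
        qed
      qed
      define m where "m = l - 3"
      have m: "l + m = k - 1" "m - 1 = l - 4" "m = Suc (l - 4)" "l + m + l = k + (l - 1)" "odd (l - 4)"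
        using b kt l5 lq unfolding m_def by auto
      have c1: "w!(l+m) \<noteq> w!m" using sh[of "l + m"] kt b l5 unfolding m_def by simp
      have c2: "w!(l+m+l) \<noteq> w!(l+m+l-l)" using sh[of "l+m+l"] kt b l5 unfolding m_def by simp
      have c3: "w!(l+m) \<noteq> w!(l+(l-4))" using adj[of "l+m"] kt b l5 unfolding m_def
        by (simp add: numeral_eq_Suc)
      have c4: "w!(l+(l-4)) = 3" using claim[of "l-4"] m by simp
      have c5: "w!m = 0" using Wx[of m] Xo[of m] l5 lq unfolding m_def by simp
      have c6: "w!(l+m+l) = 2" using m(4) Wy[of "l-1"] Yl l5 by simp
      have "w!(l+m) \<le> 3" using bd[of "l+m"] d kt b l5 unfolding m_def by simp
      then have "w!(l+m) = 1" using c1 c2 c3 c4 c5 c6 by simp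
      moreover have "w!k \<noteq> w!(k-1)" using adj[of k] kt by simp
      ultimately show False using wk m(1) by simp
    qed
  qed
qed


lemma vert_map:
  assumes "\<forall>i<l. f i \<le> d" and "\<forall>i. i + 1 < l \<longrightarrow> f i \<noteq> f (i+1)"
  shows "sk_vert d l (map f [0..<l])"
  unfolding sk_vert_def using assms by auto

lemma mod2_ne: "(i::nat) mod 2 \<noteq> Suc i mod 2" by presburger

lemma vert_even:
  assumes "l \<ge> 2" "d \<ge> 3"
  shows "sk_vert d l (map (XE l) [0..<l])" "sk_vert d l (map YE [0..<l])"
proof -
  show "sk_vert d l (map (XE l) [0..<l])"
  proof (rule vert_map)
    show "\<forall>i<l. XE l i \<le> d" using assms by (auto simp: XE_def)
    show "\<forall>i. i + 1 < l \<longrightarrow> XE l i \<noteq> XE l (i + 1)"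
    proof (intro allI impI)
      fix i assume i: "i + 1 < l"
      show "XE l i \<noteq> XE l (i + 1)"
      proof (cases "i + 1 = l - 1")
        case True then show ?thesis using i by (simp add: XE_def)
      next
        case False then show ?thesis using i mod2_ne[of i] by (simp add: XE_def)
      qed
    qed
  qed
  show "sk_vert d l (map YE [0..<l])"
  proof (rule vert_map)
    show "\<forall>i<l. YE i \<le> d" using assms by (auto simp: YE_def)
    show "\<forall>i. i + 1 < l \<longrightarrow> YE i \<noteq> YE (i + 1)"
    proof (intro allI impI)
      fix i assume i: "i + 1 < l"
      show "YE i \<noteq> YE (i + 1)"
      proof (cases i)
        case 0 then show ?thesis by (simp add: YE_def)
      next
        case (Suc j) then show ?thesis using mod2_ne[of j] by (simp add: YE_def)
      qed
    qed
  qed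
qed

lemma vert_odd:
  assumes "l \<ge> 5"
  shows "sk_vert 3 l (map (XO l) [0..<l])" "sk_vert 3 l (map (YO l) [0..<l])"
proof -
  show "sk_vert 3 l (map (XO l) [0..<l])"
  proof (rule vert_map)
    show "\<forall>i<l. XO l i \<le> 3" by (auto simp: XO_def)
    show "\<forall>i. i + 1 < l \<longrightarrow> XO l i \<noteq> XO l (i + 1)"
    proof (intro allI impI)
      fix i assume i: "i + 1 < l"
      show "XO l i \<noteq> XO l (i + 1)"
      proof (cases "i + 1 = l - 1")
        case True then show ?thesis using i assms by (simp add: XO_def)
      next
        case False
        show ?thesis
        proof (cases "i + 1 = l - 2")
          case True
          then have "i \<noteq> l - 1" "i \<noteq> l - 2" "i mod 2 \<noteq> 2" by auto
          then show ?thesis using True by (simp add: XO_def)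
        next
          case False2: False
          then have "i \<noteq> l - 1" "i \<noteq> l - 2" using i False by arith+
          then show ?thesis using False False2 mod2_ne[of i] by (simp add: XO_def)
        qed
      qed
    qed
  qed
  show "sk_vert 3 l (map (YO l) [0..<l])"
  proof (rule vert_map)
    show "\<forall>i<l. YO l i \<le> 3" by (auto simp: YO_def)
    show "\<forall>i. i + 1 < l \<longrightarrow> YO l i \<noteq> YO l (i + 1)"
    proof (intro allI impI)
      fix i assume i: "i + 1 < l"
      show "YO l i \<noteq> YO l (i + 1)"
      proof (cases "i \<le> 2")
        case True then show ?thesis using i assms by (auto simp: YO_def)
      next
        case False
        show ?thesis
        proof (cases "i + 1 = l - 1")
          case True then show ?thesis using i assms False by (simp add: YO_def)
        next
          case False2: False
          then have "i \<noteq> l - 1" using i by arith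
          then show ?thesis using False False2 mod2_ne[of "Suc i"] by (simp add: YO_def)
        qed
      qed
    qed
  qed
qed

lemma dist_le:
  assumes "(sk_arc d l ^^ k) x y" "k \<le> N"
  shows "sk_dist d l x y \<le> enat N"
proof -
  have "(LEAST n. (sk_arc d l ^^ n) x y) \<le> k" by (rule Least_le) fact
  then show ?thesis using assms unfolding sk_dist_def by auto
qed

lemma dist_eq:
  assumes "(sk_arc d l ^^ N) x y" "\<And>k. k < N \<Longrightarrow> \<not> (sk_arc d l ^^ k) x y"
  shows "sk_dist d l x y = enat N"
proof -
  have "(LEAST n. (sk_arc d l ^^ n) x y) = N"
    by (rule Least_equality) (use assms not_less in blast)+
  then show ?thesis using assms unfolding sk_dist_def by auto
qed

lemma diam_eq:
  assumes up: "\<And>x y. sk_vert d l x \<Longrightarrow> sk_vert d l y \<Longrightarrow> \<exists>k\<le>N. (sk_arc d l ^^ k) x y"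
    and x0: "sk_vert d l x0" and y0: "sk_vert d l y0"
    and p: "(sk_arc d l ^^ N) x0 y0" and np: "\<And>k. k < N \<Longrightarrow> \<not> (sk_arc d l ^^ k) x0 y0"
  shows "sk_diameter d l = enat N"
  unfolding sk_diameter_def
proof (rule antisym)
  show "(SUP x\<in>{x. sk_vert d l x}. SUP y\<in>{y. sk_vert d l y}. sk_dist d l x y) \<le> enat N"
  proof (intro SUP_least)
    fix x y assume "x \<in> {x. sk_vert d l x}" "y \<in> {y. sk_vert d l y}"
    then obtain k where "k \<le> N" "(sk_arc d l ^^ k) x y" using up by auto
    then show "sk_dist d l x y \<le> enat N" using dist_le by blast
  qed
  have "enat N = sk_dist d l x0 y0" using dist_eq[OF p np] by simp
  then show "enat N \<le> (SUP x\<in>{x. sk_vert d l x}. SUP y\<in>{y. sk_vert d l y}. sk_dist d l x y)"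
    using x0 y0 by (intro SUP_upper2[of x0] SUP_upper2[of y0]) auto
qed

lemma diam_family:
  assumes up: "\<And>x y. sk_vert d l x \<Longrightarrow> sk_vert d l y \<Longrightarrow> \<exists>k\<le>N. (sk_arc d l ^^ k) x y"
    and x0: "sk_vert d l x0" and y0: "sk_vert d l y0"
    and np: "\<And>k. k < N \<Longrightarrow> \<not> (sk_arc d l ^^ k) x0 y0"
  shows "sk_diameter d l = enat N"
proof -
  obtain k where k: "k \<le> N" "(sk_arc d l ^^ k) x0 y0" using up[OF x0 y0] by blast
  then have "k = N" using np[of k] by (cases "k < N") auto
  then show ?thesis using diam_eq[OF up x0 y0 _ np] k by blast
qed

lemma part1:
  assumes "(d = 3 \<and> l \<ge> 4) \<or> (d \<ge> 3 \<and> l = 2)"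
  shows "sk_diameter d l = enat (2 * l)"
proof -
  have d3: "d \<ge> 3" and l2: "l \<ge> 2" using assms by auto
  have up: "\<And>x y. sk_vert d l x \<Longrightarrow> sk_vert d l y \<Longrightarrow> \<exists>k\<le>2*l. (sk_arc d l ^^ k) x y"
    using upper[OF d3] l2 by simp
  show ?thesis
  proof (cases "even l")
    case True
    have ld: "l = 2 \<or> d = 3" using assms by auto
    show ?thesis
    proof (rule diam_family[OF up vert_even[OF l2 d3]])
      fix k assume "k < 2 * l"
      then show "\<not> (sk_arc d l ^^ k) (map (XE l) [0..<l]) (map YE [0..<l])"
        using lower_even[OF l2 True d3 ld] vert_even(1)[OF l2 d3] by blast
    qed
  next
    case False
    then have "l \<noteq> 4" "l \<noteq> 2" by auto
    then have l5: "l \<ge> 5" and dd: "d = 3" using assms by auto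
    show ?thesis
    proof (rule diam_family[OF up])
      show "sk_vert d l (map (XO l) [0..<l])" "sk_vert d l (map (YO l) [0..<l])" using vert_odd[OF l5] dd by auto
    next
      fix k assume "k < 2 * l"
      then show "\<not> (sk_arc d l ^^ k) (map (XO l) [0..<l]) (map (YO l) [0..<l])"
        using lower_odd[OF l5 False dd] vert_odd(1)[OF l5] dd by blast
    qed
  qed
qed


lemma avoid3: "\<exists>f\<le>(3::nat). f \<noteq> p \<and> f \<noteq> q \<and> f \<noteq> r"
proof (rule ccontr)
  assume "\<not> ?thesis"
  then have "\<forall>f\<le>(3::nat). f = p \<or> f = q \<or> f = r \<or> f = r" by auto
  from pigeon4[OF order.refl this] show False by simp
qed

lemma upper33:
  assumes x: "sk_vert 3 3 x" and y: "sk_vert 3 3 y"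
  shows "\<exists>k\<le>5. (sk_arc 3 3 ^^ k) x y"
proof -
  have lx: "length x = 3" and ly: "length y = 3" using x y unfolding sk_vert_def by auto
  have ax0: "\<forall>i. i + 1 < 3 \<longrightarrow> x!i \<noteq> x!(i+1)" using x unfolding sk_vert_def by blast
  have ax: "x!0 \<noteq> x!1" "x!1 \<noteq> x!2" using spec[OF ax0, of 0] spec[OF ax0, of 1] by (simp_all add: numeral_2_eq_2)
  have ay0: "\<forall>i. i + 1 < 3 \<longrightarrow> y!i \<noteq> y!(i+1)" using y unfolding sk_vert_def by blast
  have ay: "y!0 \<noteq> y!1" "y!1 \<noteq> y!2" using spec[OF ay0, of 0] spec[OF ay0, of 1] by (simp_all add: numeral_2_eq_2)
  have dx: "x!1 \<le> 3" using x lx unfolding sk_vert_def by (auto simp: nth_mem)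
  have dy: "y!0 \<le> 3" "y!2 \<le> 3" using y ly unfolding sk_vert_def by (auto simp: nth_mem)
  have l1: "(1::nat) \<le> 3" by simp
  show ?thesis
  proof (cases "y!0 = x!2")
    case True
    obtain f where f: "f \<le> 3" "f \<noteq> x!0" "f \<noteq> x!2" "f \<noteq> y!2" using avoid3 by blast
    let ?M = "\<lambda>_::nat. f"
    have M: "\<forall>j<1. ?M j \<le> 3 \<and> ?M j \<noteq> x!j \<and> ?M j \<noteq> (if j = 0 then x!(3-1) else ?M (j-1))" using f by simp
    have A: "\<forall>i<3. 1 + i < 3 \<longrightarrow> y!i \<noteq> x!(1+i)"
    proof (intro allI impI)
      fix i :: nat assume "i < 3" "1 + i < 3"
      then have "i = 0 \<or> i = 1" by auto
      then show "y!i \<noteq> x!(1+i)" using True ax ay by (auto simp: numeral_2_eq_2)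
    qed
    have B: "\<forall>i<3. 3 \<le> 1 + i \<longrightarrow> y!i \<noteq> ?M (1+i-3)"
    proof (intro allI impI)
      fix i :: nat assume "i < 3" "3 \<le> 1 + i"
      then have "i = 2" by auto
      then show "y!i \<noteq> ?M (1+i-3)" using f by auto
    qed
    have C: "y!0 \<noteq> (if 1 = (0::nat) then x!(3-1) else ?M (1-1))" using f True by auto
    have "(sk_arc 3 3 ^^ (3+1)) x y" by (rule build[OF l1 _ x y M A B C]) simp
    then show ?thesis by (intro exI[of _ 4]) simp
  next
    case False
    show ?thesis
    proof (cases "\<exists>f g. f \<le> 3 \<and> f \<noteq> x!0 \<and> f \<noteq> x!2 \<and> f \<noteq> y!1 \<and>
                     g \<le> 3 \<and> g \<noteq> x!1 \<and> g \<noteq> f \<and> g \<noteq> y!2 \<and> g \<noteq> y!0")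
      case True
      then obtain f g where f: "f \<le> 3" "f \<noteq> x!0" "f \<noteq> x!2" "f \<noteq> y!1"
        and g: "g \<le> 3" "g \<noteq> x!1" "g \<noteq> f" "g \<noteq> y!2" "g \<noteq> y!0" by blast
      define M where "M j = (if j = 0 then f else g)" for j :: nat
      have M: "\<forall>j<2. M j \<le> 3 \<and> M j \<noteq> x!j \<and> M j \<noteq> (if j = 0 then x!(3-1) else M (j-1))"
      proof (intro allI impI)
        fix j :: nat assume "j < 2" then have "j = 0 \<or> j = 1" by auto
        then show "M j \<le> 3 \<and> M j \<noteq> x!j \<and> M j \<noteq> (if j = 0 then x!(3-1) else M (j-1))"
          using f g unfolding M_def by auto
      qed
      have A: "\<forall>i<3. 2 + i < 3 \<longrightarrow> y!i \<noteq> x!(2+i)" using False by auto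
      have B: "\<forall>i<3. 3 \<le> 2 + i \<longrightarrow> y!i \<noteq> M (2+i-3)"
      proof (intro allI impI)
        fix i :: nat assume "i < 3" "3 \<le> 2 + i"
        then have "i = 1 \<or> i = 2" by auto
        then show "y!i \<noteq> M (2+i-3)" using f g unfolding M_def by auto
      qed
      have C: "y!0 \<noteq> (if 2 = (0::nat) then x!(3-1) else M (2-1))" using g unfolding M_def by auto
      have "(sk_arc 3 3 ^^ (3+2)) x y" by (rule build[OF l1 _ x y M A B C]) simp
      then show ?thesis by (intro exI[of _ 5]) simp
    next
      case False2: False
      have cov: "\<And>f. f \<le> 3 \<Longrightarrow> f \<noteq> x!0 \<Longrightarrow> f \<noteq> x!2 \<Longrightarrow> f \<noteq> y!1 \<Longrightarrow>
          x!1 \<noteq> f \<and> x!1 \<noteq> y!2 \<and> x!1 \<noteq> y!0 \<and> f \<noteq> y!2 \<and> f \<noteq> y!0 \<and> y!2 \<noteq> y!0"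
      proof -
        fix f assume f: "f \<le> 3" "f \<noteq> x!0" "f \<noteq> x!2" "f \<noteq> y!1"
        have "\<forall>g\<le>3. g = x!1 \<or> g = f \<or> g = y!2 \<or> g = y!0"
        proof (intro allI impI)
          fix g :: nat assume g: "g \<le> 3"
          show "g = x!1 \<or> g = f \<or> g = y!2 \<or> g = y!0"
          proof (rule ccontr)
            assume "\<not> (g = x!1 \<or> g = f \<or> g = y!2 \<or> g = y!0)"
            then have "f \<le> 3 \<and> f \<noteq> x!0 \<and> f \<noteq> x!2 \<and> f \<noteq> y!1 \<and>
                     g \<le> 3 \<and> g \<noteq> x!1 \<and> g \<noteq> f \<and> g \<noteq> y!2 \<and> g \<noteq> y!0" using f g by simp
            then show False using False2 by blast
          qed
        qed
        from pigeon4[OF order.refl this]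
        show "x!1 \<noteq> f \<and> x!1 \<noteq> y!2 \<and> x!1 \<noteq> y!0 \<and> f \<noteq> y!2 \<and> f \<noteq> y!0 \<and> y!2 \<noteq> y!0" by simp
      qed
      obtain f where f: "f \<le> 3" "f \<noteq> x!0" "f \<noteq> x!2" "f \<noteq> y!1" using avoid3 by blast
      note d1 = cov[OF f]
      have h2: "\<forall>g\<le>3. g = x!0 \<or> g = x!2 \<or> g = y!1 \<or> g = f"
      proof (rule ccontr)
        assume "\<not> ?thesis"
        then obtain g where g: "g \<le> 3" "g \<noteq> x!0" "g \<noteq> x!2" "g \<noteq> y!1" "g \<noteq> f" by blast
        note d2 = cov[OF g(1-4)]
        show False
        proof (cases "f = x!1 \<or> f = g \<or> f = y!2 \<or> f = y!0")
          case True then show False using d1 d2 g(5) by auto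
        next
          case False
          then have "g \<le> 3 \<and> g \<noteq> x!0 \<and> g \<noteq> x!2 \<and> g \<noteq> y!1 \<and>
                     f \<le> 3 \<and> f \<noteq> x!1 \<and> f \<noteq> g \<and> f \<noteq> y!2 \<and> f \<noteq> y!0" using f g by simp
          then show False using False2 by blast
        qed
      qed
      from pigeon4[OF order.refl h2] have d3: "x!0 \<noteq> x!2" "x!0 \<noteq> y!1" "x!0 \<noteq> f" "x!2 \<noteq> y!1" "x!2 \<noteq> f" "y!1 \<noteq> f" by auto
      have e1: "x!1 = y!1" using h2[rule_format, OF dx] ax d1 by auto
      have e0: "y!0 = x!0" using h2[rule_format, OF dy(1)] False ay d1 by auto
      have e2: "y!2 = x!2" using h2[rule_format, OF dy(2)] ay d1 e0 by auto
      have "x = y" by (rule nth_equalityI) (use lx ly e0 e1 e2 in \<open>auto simp: less_Suc_eq numeral_3_eq_3 numeral_2_eq_2\<close>)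
      then show ?thesis by (intro exI[of _ 0]) simp
    qed
  qed
qed

lemma lower33: "k < 5 \<Longrightarrow> \<not> (sk_arc 3 3 ^^ k) [0,1,0] [1,2,0]"
proof
  assume k: "k < 5" and p: "(sk_arc 3 3 ^^ k) [0,1,0] [1,2,0]"
  have xv: "sk_vert 3 3 [0,1,0]" unfolding sk_vert_def by (auto simp: less_Suc_eq numeral_3_eq_3)
  have l1: "(1::nat) \<le> 3" by simp
  obtain w :: "nat list" where Wx: "\<And>j. j < 3 \<Longrightarrow> w!j = [0,1,0] ! j" and Wy: "\<And>i. i < 3 \<Longrightarrow> w!(k+i) = [1,2,0] ! i"
    and adj: "\<And>j. 0 < j \<Longrightarrow> j < 3 + k \<Longrightarrow> w!j \<noteq> w!(j-1)"
    and sh: "\<And>j. 3 \<le> j \<Longrightarrow> j < 3 + k \<Longrightarrow> w!j \<noteq> w!(j-3)"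
    and "\<And>j. j < 3 + k \<Longrightarrow> w!j \<le> 3"
    by (rule walk_facts[OF l1 xv p]) blast
  have "k = 0 \<or> k = 1 \<or> k = 2 \<or> k = 3 \<or> k = 4" using k by auto
  then show False
  proof (elim disjE)
    assume "k = 0" then show False using Wx[of 0] Wy[of 0] by simp
  next
    assume "k = 1" then show False using Wx[of 2] Wy[of 1] by (simp add: numeral_2_eq_2)
  next
    assume "k = 2" then show False using Wx[of 2] Wy[of 0] by simp
  next
    assume "k = 3" then show False using sh[of 5] Wx[of 2] Wy[of 2] by simp
  next
    assume "k = 4" then show False using sh[of 4] Wx[of 1] Wy[of 0] by simp
  qed
qed

theorem corollary1:
  fixes d l :: nat
  shows "(((d = 3 \<and> l \<ge> 4) \<or> (d \<ge> 3 \<and> l = 2)) \<longrightarrow> sk_diameter d l = enat (2 * l))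
         \<and> sk_diameter 3 3 = enat 5"
proof
  show "((d = 3 \<and> l \<ge> 4) \<or> (d \<ge> 3 \<and> l = 2)) \<longrightarrow> sk_diameter d l = enat (2 * l)"
    using part1 by blast
  have xv: "sk_vert 3 3 [0,1,0]" unfolding sk_vert_def by (auto simp: less_Suc_eq numeral_3_eq_3)
  have yv: "sk_vert 3 3 [1,2,0]" unfolding sk_vert_def by (auto simp: less_Suc_eq numeral_3_eq_3)
  show "sk_diameter 3 3 = enat 5"
    by (rule diam_family[OF upper33 xv yv lower33])
qed


end
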